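(* Let $H_1,H_2$ be Hermitian matrices with $H_1=D_1^\dagger D_1$ for some matrix $D_1$, and suppose there are constants $\widetilde C_1,\widetilde C_2\ge0$ such that for every vector $\vec v$: $\|[H_1,H_2]\vec v\|\le\widetilde C_1(\|D_1\vec v\|+\|\vec v\|)$ and $\|[H_1,[H_1,H_2]]\vec v\|\le\widetilde C_2(\|H_1\vec v\|+\|\vec v\|)$. Then: (1) For every vector $\vec v$, $\|D_1\vec v\|\le\|H_1\vec v\|+\|\vec v\|$. (2) For every real $\xi$ with $(\widetilde C_1+\|H_2\|)|\xi|\le1/2$ and every vector $\vec v$, $\|H_1\exp(\mathrm{i}\xi H_2)\vec v\|\le2(\|H_1\vec v\|+\|\vec v\|)$. (3) Let $K\ge1$, $h>0$, and for $1\le k\le K$ let $H_{l_k}\in\{H_1,H_2\}$ and $\xi_k\in\mathbb{R}$ with $(\widetilde C_1+\|H_2\|)|\xi_k|h\le1/2$. Put $\vec w=\big[\prod_{k=1}^K\exp(\mathrm{i} h\xi_kH_{l_k})\big]\vec v$. Then there is a constant $\widetilde C>0$, independent of $H_1$ and $\vec v$, such that for every $\vec v$: $\|H_1\vec w\|\le\widetilde C(\|H_1\vec v\|+\|\vec v\|)$, $\|H_2\vec w\|\le\widetilde C\|\vec v\|$, $\|[H_1,H_2]\vec w\|\le\widetilde C(\sqrt{\|\vec v\|\|H_1\vec v\|}+\|\vec v\|)$, $\|[H_1,[H_1,H_2]]\vec w\|\le\widetilde C(\|H_1\vec v\|+\|\vec v\|)$, and $\|[H_2,[H_2,H_1]]\vec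 w\|\le\widetilde C(\|H_1\vec v\|+\|\vec v\|)$.
   Context: $\|\cdot\|$ is the Euclidean vector 2-norm and the induced operator norm. $[A,B]=AB-BA$. *)

theory Defs
  imports "HOL-Analysis.Analysis"
begin

type_synonym 'n cmat = "complex^'n^'n"

definition cadj :: "'n::finite cmat \<Rightarrow> 'n cmat" where
  "cadj A = (\<chi> i j. cnj (A $ j $ i))"

definition hermitian :: "'n::finite cmat \<Rightarrow> bool" where
  "hermitian A \<longleftrightarrow> cadj A = A"

definition comm :: "'n::finite cmat \<Rightarrow> 'n cmat \<Rightarrow> 'n cmat" where
  "comm A B = A ** B - B ** A"

definition csc :: "complex \<Rightarrow> 'n::finite cmat \<Rightarrow> 'n cmat" where
  "csc c A = (\<chi> i j. c * A $ i $ j)"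

fun mpow :: "'n::finite cmat \<Rightarrow> nat \<Rightarrow> 'n cmat" where
  "mpow A 0 = mat 1"
| "mpow A (Suc k) = A ** mpow A k"

definition mexp :: "'n::finite cmat \<Rightarrow> 'n cmat" where
  "mexp A = (\<Sum>k. (1 / fact k) *\<^sub>R mpow A k)"

definition opnorm :: "'n::finite cmat \<Rightarrow> real" where
  "opnorm A = onorm (\<lambda>x::complex^'n. A *v x)"

definition mprod :: "nat \<Rightarrow> (nat \<Rightarrow> 'n::finite cmat) \<Rightarrow> 'n cmat" where
  "mprod K f = foldr (\<lambda>k M. f k ** M) [1..<K+1] (mat 1)"

end

theory Submission
  imports Defs
begin
typedef (overloaded) ('n::finite) sqm = "UNIV :: ((complex^'n) \<Rightarrow>\<^sub>L (complex^'n)) set" by auto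

setup_lifting type_definition_sqm

instantiation sqm :: (finite) real_normed_algebra_1
begin
lift_definition zero_sqm :: "'a sqm" is 0 .
lift_definition one_sqm :: "'a sqm" is id_blinfun .
lift_definition plus_sqm :: "'a sqm \<Rightarrow> 'a sqm \<Rightarrow> 'a sqm" is "(+)" .
lift_definition minus_sqm :: "'a sqm \<Rightarrow> 'a sqm \<Rightarrow> 'a sqm" is "(-)" .
lift_definition uminus_sqm :: "'a sqm \<Rightarrow> 'a sqm" is "uminus" .
lift_definition times_sqm :: "'a sqm \<Rightarrow> 'a sqm \<Rightarrow> 'a sqm" is "blinfun_compose" .
lift_definition scaleR_sqm :: "real \<Rightarrow> 'a sqm \<Rightarrow> 'a sqm" is "scaleR" .
lift_definition norm_sqm :: "'a sqm \<Rightarrow> real" is norm .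
definition dist_sqm :: "'a sqm \<Rightarrow> 'a sqm \<Rightarrow> real" where "dist_sqm a b = norm (a - b)"
definition sgn_sqm :: "'a sqm \<Rightarrow> 'a sqm" where "sgn_sqm x = scaleR (inverse (norm x)) x"
definition uniformity_sqm :: "('a sqm \<times> 'a sqm) filter" where
  "uniformity_sqm = (INF e\<in>{0 <..}. principal {(x, y). dist x y < e})"
definition open_sqm :: "'a sqm set \<Rightarrow> bool" where
  "open_sqm S = (\<forall>x\<in>S. \<forall>\<^sub>F (x', y) in uniformity. x' = x \<longrightarrow> y \<in> S)"

lemma norm_one_aux: "norm (id_blinfun :: (complex^'a) \<Rightarrow>\<^sub>L (complex^'a)) = 1"
proof (rule norm_blinfun_eqI[where x="axis undefined 1"])
  have "norm (axis (undefined::'a) (1::complex)) = 1"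
    by (simp add: norm_eq_sqrt_inner inner_axis_axis)
  then show "1 \<le> norm (blinfun_apply id_blinfun (axis undefined (1::complex))) / norm (axis (undefined::'a) (1::complex))" by simp
qed auto

lemma id_ne0: "(id_blinfun :: (complex^'a) \<Rightarrow>\<^sub>L (complex^'a)) \<noteq> 0"
  using norm_one_aux by (metis norm_zero zero_neq_one)

lemma dist_sqm_rep: "dist (x::'a sqm) y = dist (Rep_sqm x) (Rep_sqm y)"
  unfolding dist_sqm_def dist_norm by transfer simp

instance
  apply standard
  apply (unfold dist_sqm_def open_sqm_def sgn_sqm_def uniformity_sqm_def)
  apply (unfold Rep_sqm_inject[symmetric])
  apply (simp_all add: plus_sqm.rep_eq zero_sqm.rep_eq one_sqm.rep_eq minus_sqm.rep_eq uminus_sqm.rep_eq times_sqm.rep_eq scaleR_sqm.rep_eq norm_sqm.rep_eq algebra_simps)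
  using id_ne0
  by (auto intro!: blinfun_eqI simp: blinfun.bilinear_simps norm_blinfun_compose norm_triangle_ineq)
end

instance sqm :: (finite) banach
proof
  fix X :: "nat \<Rightarrow> 'a sqm"
  assume "Cauchy X"
  then have "Cauchy (\<lambda>n. Rep_sqm (X n))"
    unfolding Cauchy_def dist_sqm_rep .
  then obtain L where "(\<lambda>n. Rep_sqm (X n)) \<longlonglongrightarrow> L"
    using convergent_def Cauchy_convergent_iff by blast
  then have "X \<longlonglongrightarrow> Abs_sqm L"
    unfolding lim_sequentially dist_sqm_rep by (simp add: Abs_sqm_inverse)
  then show "convergent X" by (auto simp: convergent_def)
qed


lemma cscR: "r *\<^sub>R (z::complex) = complex_of_real r * z"
  by (simp add: scaleR_conv_of_real)

definition ci :: "complex^'n::finite \<Rightarrow> complex^'n" where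
  "ci x = (\<chi> i. \<i> * x $ i)"

lemma mv_assoc: "(A ** B) *v (x::complex^'n::finite) = A *v (B *v x)"
  by (simp add: matrix_vector_mul_assoc)

lemma mv_scaleR: "(M::complex^'n::finite^'m::finite) *v (r *\<^sub>R x) = r *\<^sub>R (M *v x)"
  by (simp add: vec_eq_iff matrix_vector_mult_def cscR sum_distrib_left algebra_simps)

lemma scaleR_mv: "((r *\<^sub>R M)::complex^'n::finite^'m::finite) *v x = r *\<^sub>R (M *v x)"
  by (simp add: vec_eq_iff matrix_vector_mult_def cscR sum_distrib_left algebra_simps)

lemma comm_mv: "comm A B *v (x::complex^'n::finite) = A *v (B *v x) - B *v (A *v x)"
  by (simp add: comm_def matrix_vector_mult_diff_rdistrib mv_assoc)

lemma ci_mv: "(M::complex^'n::finite^'m::finite) *v ci x = ci (M *v x)"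
  by (simp add: vec_eq_iff matrix_vector_mult_def ci_def sum_distrib_left algebra_simps)

lemma csc_mv: "csc (\<i> * of_real r) M *v x = r *\<^sub>R ci (M *v (x::complex^'n::finite))"
  by (simp add: vec_eq_iff matrix_vector_mult_def ci_def csc_def sum_distrib_left cscR algebra_simps)

lemma csc_eq_scaleR: "csc (\<i> * of_real r) M = r *\<^sub>R csc \<i> (M::complex^'n::finite^'n)"
  by (simp add: vec_eq_iff csc_def cscR)

lemma inner_vec_sum: "inner (x::complex^'n::finite) y = Re (\<Sum>i\<in>UNIV. x $ i * cnj (y $ i))"
  by (simp add: inner_vec_def inner_complex_def Re_sum)
  
lemma adj_inner: "inner x ((M::complex^'n::finite^'n) *v y) = inner (cadj M *v x) y"
proof -
  have "(\<Sum>i\<in>UNIV. x $ i * cnj ((M *v y) $ i)) = (\<Sum>i\<in>UNIV. \<Sum>j\<in>UNIV. x $ i * cnj (M $ i $ j) * cnj (y $ j))"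
    by (simp add: matrix_vector_mult_def sum_distrib_left mult.assoc)
  also have "\<dots> = (\<Sum>j\<in>UNIV. \<Sum>i\<in>UNIV. x $ i * cnj (M $ i $ j) * cnj (y $ j))"
    by (rule sum.swap)
  also have "\<dots> = (\<Sum>j\<in>UNIV. (cadj M *v x) $ j * cnj (y $ j))"
    by (simp add: matrix_vector_mult_def cadj_def sum_distrib_right sum_distrib_left algebra_simps)
  finally show ?thesis by (simp add: inner_vec_sum)
qed

lemma norm_ci [simp]: "norm (ci x) = norm (x::complex^'n::finite)"
  by (simp add: norm_vec_def ci_def norm_mult)

lemma inner_ci_swap: "inner z (ci w) = - inner (ci z) (w::complex^'n::finite)"
  by (simp add: inner_vec_sum ci_def Re_sum[symmetric] sum_negf[symmetric] algebra_simps)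
    
lemma ci_add: "ci (x + y) = ci x + ci (y::complex^'n::finite)"
  by (simp add: ci_def vec_eq_iff algebra_simps)

lemma herm_skew:
  assumes "hermitian H"
  shows "inner y (ci ((H::complex^'n::finite^'n) *v y)) = 0"
proof -
  have "inner y (ci (H *v y)) = inner y (H *v ci y)" by (simp add: ci_mv)
  also have "\<dots> = inner (H *v y) (ci y)" using assms by (simp add: adj_inner hermitian_def)
  also have "\<dots> = - inner (ci (H *v y)) y" by (rule inner_ci_swap)
  also have "\<dots> = - inner y (ci (H *v y))" by (simp add: inner_commute)
  finally show ?thesis by simp
qed

section \<open>Link to the Banach algebra\<close>

definition Phi :: "complex^'n::finite^'n \<Rightarrow> 'n sqm" where
  "Phi M = Abs_sqm (Blinfun (\<lambda>x. M *v x))"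

definition ap :: "'n::finite sqm \<Rightarrow> complex^'n \<Rightarrow> complex^'n" where
  "ap S x = blinfun_apply (Rep_sqm S) x"

lemma ap_Phi [simp]: "ap (Phi M) x = M *v x"
  by (simp add: ap_def Phi_def Abs_sqm_inverse bounded_linear_Blinfun_apply)

lemma ap_times [simp]: "ap (S * T) x = ap S (ap T x)"
  by (simp add: ap_def times_sqm.rep_eq)

lemma ap_one [simp]: "ap 1 x = x"
  by (simp add: ap_def one_sqm.rep_eq)

lemma ap_add: "ap (S + T) x = ap S x + ap T x"
  by (simp add: ap_def plus_sqm.rep_eq blinfun.bilinear_simps)

lemma ap_scaleR: "ap (r *\<^sub>R S) x = r *\<^sub>R ap S x"
  by (simp add: ap_def scaleR_sqm.rep_eq blinfun.bilinear_simps)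

lemma ap_zero_right [simp]: "ap S 0 = 0"
  by (simp add: ap_def)

lemma ap_linear_right: "ap S (x + y) = ap S x + ap S y" "ap S (r *\<^sub>R x) = r *\<^sub>R ap S x"
  by (simp_all add: ap_def blinfun.bilinear_simps)

lemma norm_ap: "norm (ap S x) \<le> norm S * norm x"
  by (simp add: ap_def norm_sqm.rep_eq norm_blinfun)

lemma sqm_eqI: "(\<And>x. ap S x = ap T x) \<Longrightarrow> S = T"
  by (metis Rep_sqm_inject ap_def blinfun_eqI)

lemma Phi_mult: "Phi (A ** B) = Phi A * Phi B"
  by (rule sqm_eqI) (simp add: mv_assoc)

lemma Phi_one: "Phi (mat 1) = 1"
  by (rule sqm_eqI) simp

lemma Phi_pow: "Phi (mpow A k) = Phi A ^ k"
  by (induction k) (simp_all add: Phi_one Phi_mult)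

lemma Phi_scaleR: "Phi (r *\<^sub>R M) = r *\<^sub>R Phi M"
  by (rule sqm_eqI) (simp add: ap_scaleR scaleR_mv)

lemma bl_ap_left: "bounded_linear (\<lambda>S. ap S x)"
  by (rule bounded_linear_intro[where K="norm x"]) (auto simp: ap_add ap_scaleR norm_ap)

definition Psi :: "'n::finite sqm \<Rightarrow> complex^'n^'n" where
  "Psi S = (\<chi> i j. ap S (axis j 1) $ i)"

lemma norm_vec_le_sum: "norm (x::'a::real_normed_vector^'n::finite) \<le> (\<Sum>i\<in>UNIV. norm (x $ i))"
  by (simp add: norm_vec_def L2_set_le_sum)

lemma norm_nth_le_c: "norm ((x::'a::real_normed_vector^'n::finite) $ i) \<le> norm x"
  unfolding norm_vec_def by (rule member_le_L2_set) simp_all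

lemma norm_axis_c [simp]: "norm (axis j (1::complex) :: complex^'n::finite) = 1"
  by (simp add: norm_eq_sqrt_inner inner_axis_axis)

lemma bl_Psi: "bounded_linear (Psi :: 'n::finite sqm \<Rightarrow> _)"
proof (rule bounded_linear_intro[where K="real CARD('n) * real CARD('n)"])
  fix S T :: "'n sqm" and r :: real
  show "Psi (S + T) = Psi S + Psi T" by (simp add: Psi_def vec_eq_iff ap_add)
  show "Psi (r *\<^sub>R S) = r *\<^sub>R Psi S" by (simp add: Psi_def vec_eq_iff ap_scaleR)
  have "norm (Psi S) \<le> (\<Sum>i\<in>UNIV. norm (Psi S $ i))" by (rule norm_vec_le_sum)
  also have "\<dots> \<le> (\<Sum>i\<in>(UNIV::'n set). \<Sum>j\<in>(UNIV::'n set). norm S)"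
  proof (rule sum_mono)
    fix i
    have "norm (Psi S $ i) \<le> (\<Sum>j\<in>UNIV. norm (Psi S $ i $ j))" by (rule norm_vec_le_sum)
    also have "\<dots> \<le> (\<Sum>j\<in>(UNIV::'n set). norm S)"
    proof (rule sum_mono)
      fix j
      have "norm (Psi S $ i $ j) \<le> norm (ap S (axis j 1))"
        unfolding Psi_def vec_lambda_beta by (rule norm_nth_le_c)
      also have "\<dots> \<le> norm S" using norm_ap[of S "axis j 1"] by simp
      finally show "norm (Psi S $ i $ j) \<le> norm S" .
    qed
    finally show "norm (Psi S $ i) \<le> (\<Sum>j\<in>(UNIV::'n set). norm S)" .
  qed
  also have "\<dots> = norm S * (real CARD('n) * real CARD('n))" by simp
  finally show "norm (Psi S) \<le> norm S * (real CARD('n) * real CARD('n))" .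
qed

lemma Psi_Phi: "Psi (Phi M) = M"
  by (simp add: Psi_def vec_eq_iff matrix_vector_mult_def axis_def if_distrib cong: if_cong)

lemma bl_mv_left: "bounded_linear (\<lambda>M::complex^'n::finite^'n. M *v v)"
proof -
  have "linear (\<lambda>M::complex^'n::finite^'n. M *v v)"
    by (rule linearI) (simp_all add: matrix_vector_mult_add_rdistrib scaleR_mv)
  then show ?thesis by (simp add: linear_conv_bounded_linear)
qed

lemma mexp_ap: "mexp A *v v = ap (exp (Phi A)) v"
proof -
  have s1: "(\<lambda>k. (1 / fact k) *\<^sub>R Phi A ^ k) sums exp (Phi A)"
    using exp_converges[of "Phi A"] by (simp add: divide_inverse)
  have "(\<lambda>k. Psi ((1 / fact k) *\<^sub>R Phi A ^ k)) sums Psi (exp (Phi A))"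
    by (rule bounded_linear.sums[OF bl_Psi s1])
  moreover have "Psi ((1 / fact k) *\<^sub>R Phi A ^ k) = (1 / fact k) *\<^sub>R mpow A k" for k
    by (simp add: Phi_pow[symmetric] Phi_scaleR[symmetric] Psi_Phi)
  ultimately have s2: "(\<lambda>k. (1 / fact k) *\<^sub>R mpow A k) sums Psi (exp (Phi A))" by simp
  then have e: "mexp A = Psi (exp (Phi A))" unfolding mexp_def by (rule sums_unique[symmetric])
  have s3: "(\<lambda>k. ((1 / fact k) *\<^sub>R mpow A k) *v v) sums (mexp A *v v)"
    unfolding e by (rule bounded_linear.sums[OF bl_mv_left s2])
  have s4: "(\<lambda>k. ap ((1 / fact k) *\<^sub>R Phi A ^ k) v) sums ap (exp (Phi A)) v"
    by (rule bounded_linear.sums[OF bl_ap_left s1])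
  have "ap ((1 / fact k) *\<^sub>R Phi A ^ k) v = ((1 / fact k) *\<^sub>R mpow A k) *v v" for k
    by (simp add: ap_scaleR scaleR_mv Phi_pow[symmetric])
  with s4 have "(\<lambda>k. ((1 / fact k) *\<^sub>R mpow A k) *v v) sums ap (exp (Phi A)) v" by simp
  with s3 show ?thesis by (rule sums_unique2)
qed

section \<open>Evolution estimates\<close>

lemma deriv_inner_self:
  assumes "(y has_vector_derivative y') (at t)"
  shows "((\<lambda>t. inner (y t) (y t)) has_real_derivative 2 * inner (y t) y') (at t)"
proof -
  have "((\<lambda>t. inner (y t) (y t)) has_vector_derivative (inner (y t) y' + inner y' (y t))) (at t)"
    by (rule bounded_bilinear.has_vector_derivative[OF bounded_bilinear_inner assms assms])
  then show ?thesis
    by (simp add: has_real_derivative_iff_has_vector_derivative inner_commute)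
qed

lemma path_deriv:
  "((\<lambda>t. ap (exp (t *\<^sub>R K)) v) has_vector_derivative ap K (ap (exp (t *\<^sub>R K)) v)) (at t)"
proof -
  have "((\<lambda>t. ap (exp (t *\<^sub>R K)) v) has_vector_derivative ap (K * exp (t *\<^sub>R K)) v) (at t)"
    by (rule bounded_linear.has_vector_derivative[OF bl_ap_left exp_scaleR_has_vector_derivative_left])
  then show ?thesis by simp
qed

lemma ap_csc: "ap (Phi (csc (\<i> * of_real r) H)) x = r *\<^sub>R ci (H *v x)"
  by (simp add: csc_mv)

lemma unit_path:
  assumes hH: "hermitian H"
  shows "norm (ap (exp (t *\<^sub>R Phi (csc (\<i> * of_real r) H))) v) = norm v"
proof -
  define K where "K = Phi (csc (\<i> * of_real r) H)"
  define y where "y t = ap (exp (t *\<^sub>R K)) v" for t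
  have yd: "(y has_vector_derivative r *\<^sub>R ci (H *v y t)) (at t)" for t
    using path_deriv[of K v t] unfolding y_def K_def ap_csc .
  have "((\<lambda>t. inner (y t) (y t)) has_real_derivative 0) (at t)" for t
    using deriv_inner_self[OF yd[of t]] by (simp add: herm_skew[OF hH])
  then obtain c where "\<forall>x\<in>UNIV. inner (y x) (y x) = c"
    using has_field_derivative_zero_constant[of UNIV "\<lambda>t. inner (y t) (y t)"] by auto
  then have "inner (y t) (y t) = inner (y 0) (y 0)" by simp
  moreover have "y 0 = v" by (simp add: y_def)
  ultimately show ?thesis by (simp add: y_def K_def norm_eq_sqrt_inner)
qed

lemma unitary:
  assumes "hermitian H"
  shows "norm (mexp (csc (\<i> * of_real r) H) *v v) = norm v"
  using unit_path[OF assms, of 1 r v] by (simp add: mexp_ap)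

lemma exp_half_le: "exp (1/2::real) \<le> 7/4"
proof -
  have "exp (1/2::real) * exp (1/2) = exp 1" by (simp add: exp_add[symmetric])
  also have "\<dots> \<le> 3" by (rule exp_le)
  finally have "(exp (1/2::real))^2 \<le> (7/4)^2" by (simp add: power2_eq_square)
  then show ?thesis by (rule power2_le_imp_le) simp
qed

lemma step_bound:
  fixes A H :: "complex^'n::finite^'n"
  assumes hH: "hermitian H" and c: "c \<ge> 0"
    and bnd: "\<forall>x. norm (comm A H *v x) \<le> c * (norm (A *v x) + 2 * norm x)"
    and xi: "\<bar>r\<bar> * c \<le> 1/2"
  shows "norm (A *v (mexp (csc (\<i> * of_real r) H) *v v)) \<le> 2 * (norm (A *v v) + norm v)"
proof (cases "v = 0")
  case True
  then show ?thesis by simp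
next
  case False
  define K where "K = Phi (csc (\<i> * of_real r) H)"
  define y where "y t = ap (exp (t *\<^sub>R K)) v" for t
  define n where "n = norm v"
  define a where "a = norm (A *v v)"
  define e where "e = (a + n) / 8"
  define c' where "c' = \<bar>r\<bar> * c"
  have n0: "n > 0" using False by (simp add: n_def)
  have a0: "a \<ge> 0" by (simp add: a_def)
  have e0: "e > 0" using n0 a0 by (simp add: e_def)
  have c'0: "c' \<ge> 0" using c by (simp add: c'_def)
  have yd: "(y has_vector_derivative r *\<^sub>R ci (H *v y t)) (at t)" for t
    using path_deriv[of K v t] unfolding y_def K_def ap_csc .
  have ny: "norm (y t) = n" for t
    using unit_path[OF hH] by (simp add: y_def K_def n_def)
  define u where "u t = A *v y t" for t
  have ud: "(u has_vector_derivative r *\<^sub>R ci (A *v (H *v y t))) (at t)" for t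
    using bounded_linear.has_vector_derivative[OF matrix_vector_mul_bounded_linear[of A] yd[of t]]
    by (simp add: u_def[abs_def] mv_scaleR ci_mv)
  define g where "g t = inner (u t) (u t) + e^2" for t
  define g' where "g' t = 2 * r * inner (u t) (ci (comm A H *v y t))" for t
  have gd: "(g has_real_derivative g' t) (at t)" for t
  proof -
    have "A *v (H *v y t) = H *v u t + comm A H *v y t" by (simp add: comm_mv u_def)
    then have "inner (u t) (ci (A *v (H *v y t))) = inner (u t) (ci (comm A H *v y t))"
      by (simp add: ci_add inner_add_right herm_skew[OF hH])
    then have "2 * inner (u t) (r *\<^sub>R ci (A *v (H *v y t))) + 0 = g' t"
      by (simp add: g'_def)
    then show ?thesis
      using DERIV_add[OF deriv_inner_self[OF ud[of t]] DERIV_const[of "e^2" "at t"]]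
      unfolding g_def[abs_def] by simp
  qed
  have nu_le: "norm (u t) \<le> sqrt (g t)" for t
    by (rule real_le_rsqrt) (simp add: g_def power2_norm_eq_inner)
  have g_pos: "g t > 0" for t
    unfolding g_def using e0 by (simp add: add_nonneg_pos)
  have g'_le: "g' t \<le> 2 * c' * sqrt (g t) * (sqrt (g t) + 2 * n)" for t
  proof -
    have "g' t \<le> 2 * \<bar>r\<bar> * \<bar>inner (u t) (ci (comm A H *v y t))\<bar>"
      unfolding g'_def using abs_ge_self[of "r * inner (u t) (ci (comm A H *v y t))"]
      by (simp add: abs_mult)
    also have "\<dots> \<le> 2 * \<bar>r\<bar> * (norm (u t) * norm (comm A H *v y t))"
      using Cauchy_Schwarz_ineq2[of "u t" "ci (comm A H *v y t)"] by (intro mult_left_mono) auto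
    also have "\<dots> \<le> 2 * \<bar>r\<bar> * (norm (u t) * (c * (norm (u t) + 2 * n)))"
      using bnd[rule_format, of "y t"] ny[of t] by (intro mult_left_mono mult_mono) (auto simp: u_def)
    also have "\<dots> \<le> 2 * \<bar>r\<bar> * (sqrt (g t) * (c * (sqrt (g t) + 2 * n)))"
      using nu_le[of t] c n0 g_pos[of t] by (intro mult_left_mono mult_mono) auto
    finally show ?thesis by (simp only: c'_def mult_ac order_refl)
  qed
  define F where "F t = exp (- (c' * t)) * (sqrt (g t) + 2 * n)" for t
  have Fd: "(F has_real_derivative exp (- (c' * t)) * (g' t * (inverse (sqrt (g t)) / 2) - c' * (sqrt (g t) + 2 * n))) (at t)" for t
  proof -
    have sd: "((\<lambda>t. sqrt (g t)) has_real_derivative inverse (sqrt (g t)) / 2 * g' t) (at t)"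
      by (rule DERIV_chain2[OF DERIV_real_sqrt[OF g_pos] gd])
    have ed: "((\<lambda>t. exp (- (c' * t))) has_real_derivative exp (- (c' * t)) * (- c')) (at t)"
      by (rule DERIV_chain2[OF DERIV_exp]) (auto intro!: derivative_eq_intros)
    show ?thesis
      unfolding F_def
      using DERIV_mult[OF ed DERIV_add[OF sd DERIV_const[of "2*n" "at t"]]]
      by (simp add: algebra_simps)
  qed
  have "F 1 \<le> F 0"
  proof (rule DERIV_nonpos_imp_nonincreasing[where f=F])
    fix t :: real
    have sg: "sqrt (g t) > 0" using g_pos[of t] by simp
    have "g' t * (inverse (sqrt (g t)) / 2) \<le> c' * (sqrt (g t) + 2 * n)"
    proof -
      have "g' t * (inverse (sqrt (g t)) / 2) \<le> 2 * c' * sqrt (g t) * (sqrt (g t) + 2 * n) * (inverse (sqrt (g t)) / 2)"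
        using g'_le[of t] sg by (intro mult_right_mono) auto
      also have "\<dots> = c' * (sqrt (g t) + 2 * n)" using sg by (simp add: field_simps)
      finally show ?thesis .
    qed
    then show "\<exists>y. DERIV F t :> y \<and> y \<le> 0"
      using Fd[of t] by (intro exI[of _ "exp (- (c' * t)) * (g' t * (inverse (sqrt (g t)) / 2) - c' * (sqrt (g t) + 2 * n))"])
        (auto simp: mult_nonneg_nonpos)
  qed simp
  moreover have "F 0 \<le> a + e + 2 * n"
  proof -
    have "y 0 = v" by (simp add: y_def)
    then have "g 0 = a^2 + e^2" by (simp add: g_def u_def a_def power2_norm_eq_inner)
    moreover have "sqrt (a^2 + e^2) \<le> a + e"
      using a0 e0 by (intro real_le_lsqrt) (auto simp: power2_eq_square algebra_simps)
    ultimately show ?thesis by (simp add: F_def)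
  qed
  ultimately have "exp (- c') * (sqrt (g 1) + 2 * n) \<le> a + e + 2 * n" by (simp add: F_def)
  then have "sqrt (g 1) + 2 * n \<le> exp c' * (a + e + 2 * n)"
    by (simp add: exp_minus field_simps)
  also have "\<dots> \<le> 7/4 * (a + e + 2 * n)"
  proof (rule mult_right_mono)
    have "exp c' \<le> exp (1/2)" using xi by (simp add: c'_def)
    then show "exp c' \<le> 7/4" using exp_half_le by linarith
  qed (use a0 e0 n0 in auto)
  finally have "norm (u 1) \<le> 7/4 * (a + e + 2 * n) - 2 * n" using nu_le[of 1] by linarith
  moreover have "u 1 = A *v (mexp (csc (\<i> * of_real r) H) *v v)"
    by (simp add: u_def y_def K_def mexp_ap)
  ultimately have "norm (A *v (mexp (csc (\<i> * of_real r) H) *v v)) \<le> 7/4 * (a + e + 2 * n) - 2 * n"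
    by simp
  then show ?thesis unfolding a_def[symmetric] n_def[symmetric] e_def using a0 n0 by (simp add: field_simps)
qed

lemma part1:
  fixes D :: "complex^'n::finite^'n"
  assumes "H = cadj D ** D"
  shows "norm (D *v v) \<le> norm (H *v v) + norm v"
proof -
  have "(norm (D *v v))^2 = inner (D *v v) (D *v v)" by (simp add: power2_norm_eq_inner)
  also have "\<dots> = inner (H *v v) v" by (simp add: adj_inner assms mv_assoc)
  also have "\<dots> \<le> norm (H *v v) * norm v" by (rule norm_cauchy_schwarz)
  also have "\<dots> \<le> (norm (H *v v) + norm v)^2" by (simp add: power2_eq_square algebra_simps)
  finally show ?thesis by (rule power2_le_imp_le) simp
qed

lemma opnorm_bound: "norm (H *v x) \<le> opnorm H * norm (x::complex^'n::finite)"
  unfolding opnorm_def by (rule onorm[OF matrix_vector_mul_bounded_linear])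

lemma opnorm_nonneg: "opnorm (H::complex^'n::finite^'n) \<ge> 0"
  unfolding opnorm_def by (rule onorm_pos_le[OF matrix_vector_mul_bounded_linear])

lemma prod_bound:
  fixes G :: "complex^'n::finite^'n"
  assumes f: "\<forall>k\<in>set xs. \<forall>x. norm (f k *v x) = norm x \<and> norm (G *v (f k *v x)) \<le> 2 * (norm (G *v x) + norm x)"
  shows "norm (foldr (\<lambda>k M. f k ** M) xs (mat 1) *v v) = norm v \<and>
    norm (G *v (foldr (\<lambda>k M. f k ** M) xs (mat 1) *v v)) \<le> 4 ^ length xs * (norm (G *v v) + norm v)"
  using f
proof (induction xs)
  case Nil
  then show ?case by simp
next
  case (Cons k xs)
  define x where "x = foldr (\<lambda>k M. f k ** M) xs (mat 1) *v v"
  from Cons have IH: "norm x = norm v" "norm (G *v x) \<le> 4 ^ length xs * (norm (G *v v) + norm v)"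
    by (auto simp: x_def)
  from Cons.prems have fk: "norm (f k *v x) = norm x" "norm (G *v (f k *v x)) \<le> 2 * (norm (G *v x) + norm x)"
    by auto
  have eq: "foldr (\<lambda>k M. f k ** M) (k # xs) (mat 1) *v v = f k *v x"
    by (simp add: x_def mv_assoc)
  have p: "(1::real) \<le> 4 ^ length xs" by simp
  have "norm (G *v (f k *v x)) \<le> 2 * (4 ^ length xs * (norm (G *v v) + norm v) + norm v)"
    using fk IH by simp
  also have "\<dots> \<le> 4 ^ Suc (length xs) * (norm (G *v v) + norm v)"
  proof -
    have Y0: "0 \<le> norm (G *v v) + norm v" by simp
    have "norm v \<le> 1 * (norm (G *v v) + norm v)" by simp
    also have "\<dots> \<le> 4 ^ length xs * (norm (G *v v) + norm v)"
      by (rule mult_right_mono[OF p Y0])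
    finally have "norm v \<le> 4 ^ length xs * (norm (G *v v) + norm v)" .
    then show ?thesis by (simp add: algebra_simps)
  qed
  finally show ?case using eq fk IH by simp
qed

lemma core3:
  fixes G E H2 :: "complex^'n::finite^'n" and w v :: "complex^'n"
  assumes hG: "G = cadj E ** E"
    and b1: "\<forall>x. norm (comm G H2 *v x) \<le> C1 * (norm (E *v x) + norm x)"
    and b2: "\<forall>x. norm (comm G (comm G H2) *v x) \<le> C2 * (norm (G *v x) + norm x)"
    and C1: "C1 \<ge> 0" and C2: "C2 \<ge> 0" and M: "M \<ge> 1"
    and nw: "norm w = norm v" and Gw: "norm (G *v w) \<le> M * (norm (G *v v) + norm v)"
  shows "norm (H2 *v w) \<le> opnorm H2 * norm v"
    and "norm (comm G H2 *v w) \<le> C1 * (sqrt M + 1) * (sqrt (norm v * norm (G *v v)) + norm v)"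
    and "norm (comm G (comm G H2) *v w) \<le> C2 * (M + 1) * (norm (G *v v) + norm v)"
    and "norm (comm H2 (comm H2 G) *v w) \<le>
      (opnorm H2 * C1 * (M + 2) + C1 * (opnorm H2 * M + C1 * (M + 2) + 2 * opnorm H2)) * (norm (G *v v) + norm v)"
proof -
  define X where "X = norm (G *v v) + norm v"
  define h2 where "h2 = opnorm H2"
  have X0: "X \<ge> 0" by (simp add: X_def)
  have h20: "h2 \<ge> 0" by (simp add: h2_def opnorm_nonneg)
  have nvX: "norm v \<le> X" by (simp add: X_def)
  have H2b: "norm (H2 *v x) \<le> h2 * norm x" for x by (simp add: h2_def opnorm_bound)
  show "norm (H2 *v w) \<le> opnorm H2 * norm v" using opnorm_bound[of H2 w] nw by simp
  have P: "norm (comm G H2 *v x) \<le> C1 * (norm (G *v x) + 2 * norm x)" for x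
  proof -
    have "norm (comm G H2 *v x) \<le> C1 * (norm (E *v x) + norm x)" using b1 by blast
    also have "\<dots> \<le> C1 * (norm (G *v x) + 2 * norm x)"
      using part1[OF hG, of x] C1 by (intro mult_left_mono) auto
    finally show ?thesis .
  qed
  define S where "S = sqrt (norm v * norm (G *v v))"
  have S0: "S \<ge> 0" by (simp add: S_def)
  have "(norm (E *v w))^2 = inner (E *v w) (E *v w)" by (simp add: power2_norm_eq_inner)
  also have "\<dots> = inner (G *v w) w" by (simp add: adj_inner hG mv_assoc)
  also have "\<dots> \<le> norm (G *v w) * norm w" by (rule norm_cauchy_schwarz)
  also have "\<dots> \<le> M * X * norm v" using Gw nw by (simp add: X_def mult_right_mono)
  also have "\<dots> = M * (S^2 + (norm v)^2)" by (simp add: X_def S_def power2_eq_square algebra_simps)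
  also have "\<dots> \<le> M * (S + norm v)^2"
    using M S0 by (intro mult_left_mono) (auto simp: power2_eq_square algebra_simps)
  also have "\<dots> = (sqrt M * (S + norm v))^2" using M by (simp add: power_mult_distrib)
  finally have Ew: "norm (E *v w) \<le> sqrt M * (S + norm v)"
    by (rule power2_le_imp_le) (use M S0 in simp)
  have "norm (comm G H2 *v w) \<le> C1 * (norm (E *v w) + norm w)" using b1 by blast
  also have "\<dots> \<le> C1 * (sqrt M * (S + norm v) + (S + norm v))"
    using Ew nw S0 C1 by (intro mult_left_mono) auto
  finally show "norm (comm G H2 *v w) \<le> C1 * (sqrt M + 1) * (sqrt (norm v * norm (G *v v)) + norm v)"
    by (simp add: S_def algebra_simps)
  have "norm (comm G (comm G H2) *v w) \<le> C2 * (norm (G *v w) + norm w)" using b2 by blast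
  also have "\<dots> \<le> C2 * (M * X + X)"
    using Gw nw nvX C2 by (intro mult_left_mono add_mono) (auto simp: X_def)
  finally show "norm (comm G (comm G H2) *v w) \<le> C2 * (M + 1) * (norm (G *v v) + norm v)"
    by (simp add: X_def algebra_simps)
  have Pw: "norm (comm G H2 *v w) \<le> C1 * (M + 2) * X"
  proof -
    have "norm (comm G H2 *v w) \<le> C1 * (norm (G *v w) + 2 * norm w)" by (rule P)
    also have "\<dots> \<le> C1 * (M * X + 2 * X)"
      using Gw nw nvX C1 by (intro mult_left_mono add_mono) (auto simp: X_def)
    finally show ?thesis by (simp add: algebra_simps)
  qed
  have GH2w: "norm (G *v (H2 *v w)) \<le> h2 * M * X + C1 * (M + 2) * X"
  proof -
    have "G *v (H2 *v w) = H2 *v (G *v w) + comm G H2 *v w" by (simp add: comm_mv)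
    then have "norm (G *v (H2 *v w)) \<le> norm (H2 *v (G *v w)) + norm (comm G H2 *v w)"
      by (simp add: norm_triangle_ineq)
    also have "\<dots> \<le> h2 * (M * X) + C1 * (M + 2) * X"
    proof (rule add_mono)
      have "norm (G *v w) \<le> M * X" using Gw by (simp add: X_def)
      then show "norm (H2 *v (G *v w)) \<le> h2 * (M * X)"
        using H2b[of "G *v w"] h20 by (meson mult_left_mono order_trans)
    qed (rule Pw)
    finally show ?thesis by (simp add: algebra_simps)
  qed
  have PH: "norm (comm G H2 *v (H2 *v w)) \<le> C1 * (h2 * M * X + C1 * (M + 2) * X + 2 * (h2 * X))"
  proof -
    have "norm (comm G H2 *v (H2 *v w)) \<le> C1 * (norm (G *v (H2 *v w)) + 2 * norm (H2 *v w))" by (rule P)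
    also have "\<dots> \<le> C1 * (h2 * M * X + C1 * (M + 2) * X + 2 * (h2 * X))"
    proof (rule mult_left_mono[OF _ C1])
      have "2 * norm (H2 *v w) \<le> 2 * (h2 * X)"
        using H2b[of w] nw nvX h20 by (simp add: mult_left_mono order_trans)
      then show "norm (G *v (H2 *v w)) + 2 * norm (H2 *v w) \<le> h2 * M * X + C1 * (M + 2) * X + 2 * (h2 * X)"
        using GH2w by linarith
    qed
    finally show ?thesis .
  qed
  have "comm H2 (comm H2 G) *v w = comm G H2 *v (H2 *v w) - H2 *v (comm G H2 *v w)"
    by (simp add: comm_mv matrix_vector_mult_diff_distrib algebra_simps)
  then have "norm (comm H2 (comm H2 G) *v w) \<le> norm (comm G H2 *v (H2 *v w)) + norm (H2 *v (comm G H2 *v w))"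
    by (simp add: norm_triangle_ineq4)
  also have "\<dots> \<le> C1 * (h2 * M * X + C1 * (M + 2) * X + 2 * (h2 * X)) + h2 * (C1 * (M + 2) * X)"
  proof (rule add_mono[OF PH])
    show "norm (H2 *v (comm G H2 *v w)) \<le> h2 * (C1 * (M + 2) * X)"
      using H2b[of "comm G H2 *v w"] Pw h20 by (meson mult_left_mono order_trans)
  qed
  finally show "norm (comm H2 (comm H2 G) *v w) \<le>
      (opnorm H2 * C1 * (M + 2) + C1 * (opnorm H2 * M + C1 * (M + 2) + 2 * opnorm H2)) * (norm (G *v v) + norm v)"
    by (simp only: h2_def[symmetric] X_def[symmetric]) (simp add: algebra_simps)
qed

lemma le_C: "a \<le> k * Y \<Longrightarrow> k \<le> C \<Longrightarrow> 0 \<le> (Y::real) \<Longrightarrow> a \<le> C * Y"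
  by (meson mult_right_mono order_trans)

lemma comm_self: "comm A A = 0"
  by (simp add: comm_def)

theorem lemma7:
  fixes H1 H2 D1 :: "complex^'n::finite^'n" and C1 C2 :: real
  assumes herm1: "hermitian H1" and herm2: "hermitian H2"
    and D1: "H1 = cadj D1 ** D1"
    and C1: "C1 \<ge> 0" and C2: "C2 \<ge> 0"
    and b1: "\<forall>v. norm (comm H1 H2 *v v) \<le> C1 * (norm (D1 *v v) + norm v)"
    and b2: "\<forall>v. norm (comm H1 (comm H1 H2) *v v) \<le> C2 * (norm (H1 *v v) + norm v)"
  shows
   "(\<forall>v. norm (D1 *v v) \<le> norm (H1 *v v) + norm v)
  \<and> (\<forall>(\<xi>::real) v. (C1 + opnorm H2) * \<bar>\<xi>\<bar> \<le> 1/2 \<longrightarrow>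
        norm (H1 *v (mexp (csc (\<i> * of_real \<xi>) H2) *v v)) \<le> 2 * (norm (H1 *v v) + norm v))
  \<and> (\<forall>(K::nat) (h::real) (l::nat \<Rightarrow> nat) (\<xi>::nat \<Rightarrow> real).
        K \<ge> 1 \<longrightarrow> h > 0 \<longrightarrow> (\<forall>k\<in>{1..K}. l k \<in> {1, 2}) \<longrightarrow>
        (\<forall>k\<in>{1..K}. (C1 + opnorm H2) * \<bar>\<xi> k\<bar> * h \<le> 1/2) \<longrightarrow>
        (\<exists>C>0. \<forall>(G1::complex^'n^'n) (E1::complex^'n^'n).
            hermitian G1 \<longrightarrow> G1 = cadj E1 ** E1 \<longrightarrow>
            (\<forall>v. norm (comm G1 H2 *v v) \<le> C1 * (norm (E1 *v v) + norm v)) \<longrightarrow>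
            (\<forall>v. norm (comm G1 (comm G1 H2) *v v) \<le> C2 * (norm (G1 *v v) + norm v)) \<longrightarrow>
            (\<forall>v. let w = mprod K (\<lambda>k. mexp (csc (\<i> * of_real (h * \<xi> k))
                                              (if l k = 1 then G1 else H2))) *v v in
                 norm (G1 *v w) \<le> C * (norm (G1 *v v) + norm v)
               \<and> norm (H2 *v w) \<le> C * norm v
               \<and> norm (comm G1 H2 *v w) \<le> C * (sqrt (norm v * norm (G1 *v v)) + norm v)
               \<and> norm (comm G1 (comm G1 H2) *v w) \<le> C * (norm (G1 *v v) + norm v)
               \<and> norm (comm H2 (comm H2 G1) *v w) \<le> C * (norm (G1 *v v) + norm v))))"
  proof -
  have P1: "\<forall>v. norm (D1 *v v) \<le> norm (H1 *v v) + norm v" using part1[OF D1] by blast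
  have bnd1: "\<forall>x. norm (comm H1 H2 *v x) \<le> C1 * (norm (H1 *v x) + 2 * norm x)"
  proof
    fix x
    have "norm (comm H1 H2 *v x) \<le> C1 * (norm (D1 *v x) + norm x)" using b1 by blast
    also have "\<dots> \<le> C1 * (norm (H1 *v x) + 2 * norm x)"
      using P1[rule_format, of x] C1 by (intro mult_left_mono) auto
    finally show "norm (comm H1 H2 *v x) \<le> C1 * (norm (H1 *v x) + 2 * norm x)" .
  qed
  have P2: "\<forall>(\<xi>::real) v. (C1 + opnorm H2) * \<bar>\<xi>\<bar> \<le> 1/2 \<longrightarrow>
        norm (H1 *v (mexp (csc (\<i> * of_real \<xi>) H2) *v v)) \<le> 2 * (norm (H1 *v v) + norm v)"
  proof (intro allI impI)
    fix \<xi> :: real and v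
    assume a: "(C1 + opnorm H2) * \<bar>\<xi>\<bar> \<le> 1/2"
    have "opnorm H2 * \<bar>\<xi>\<bar> \<ge> 0" by (simp add: opnorm_nonneg)
    then have "\<bar>\<xi>\<bar> * C1 \<le> 1/2" using a by (simp add: algebra_simps)
    then show "norm (H1 *v (mexp (csc (\<i> * of_real \<xi>) H2) *v v)) \<le> 2 * (norm (H1 *v v) + norm v)"
      by (rule step_bound[OF herm2 C1 bnd1])
  qed
  have P3: "\<forall>(K::nat) (h::real) (l::nat \<Rightarrow> nat) (\<xi>::nat \<Rightarrow> real).
        K \<ge> 1 \<longrightarrow> h > 0 \<longrightarrow> (\<forall>k\<in>{1..K}. l k \<in> {1, 2}) \<longrightarrow>
        (\<forall>k\<in>{1..K}. (C1 + opnorm H2) * \<bar>\<xi> k\<bar> * h \<le> 1/2) \<longrightarrow>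
        (\<exists>C>0. \<forall>(G1::complex^'n^'n) (E1::complex^'n^'n).
            hermitian G1 \<longrightarrow> G1 = cadj E1 ** E1 \<longrightarrow>
            (\<forall>v. norm (comm G1 H2 *v v) \<le> C1 * (norm (E1 *v v) + norm v)) \<longrightarrow>
            (\<forall>v. norm (comm G1 (comm G1 H2) *v v) \<le> C2 * (norm (G1 *v v) + norm v)) \<longrightarrow>
            (\<forall>v. let w = mprod K (\<lambda>k. mexp (csc (\<i> * of_real (h * \<xi> k))
                                              (if l k = 1 then G1 else H2))) *v v in
                 norm (G1 *v w) \<le> C * (norm (G1 *v v) + norm v)
               \<and> norm (H2 *v w) \<le> C * norm v
               \<and> norm (comm G1 H2 *v w) \<le> C * (sqrt (norm v * norm (G1 *v v)) + norm v)
               \<and> norm (comm G1 (comm G1 H2) *v w) \<le> C * (norm (G1 *v v) + norm v)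
               \<and> norm (comm H2 (comm H2 G1) *v w) \<le> C * (norm (G1 *v v) + norm v)))"
  proof (intro allI impI)
    fix K :: nat and h :: real and l :: "nat \<Rightarrow> nat" and \<xi> :: "nat \<Rightarrow> real"
    assume K1: "K \<ge> 1" and h0: "h > 0" and lk: "\<forall>k\<in>{1..K}. l k \<in> {1, 2}"
      and xk: "\<forall>k\<in>{1..K}. (C1 + opnorm H2) * \<bar>\<xi> k\<bar> * h \<le> 1/2"
    define M where "M = (4::real) ^ K"
    define h2 where "h2 = opnorm H2"
    define k3 where "k3 = C1 * (sqrt M + 1)"
    define k4 where "k4 = C2 * (M + 1)"
    define k5 where "k5 = h2 * C1 * (M + 2) + C1 * (h2 * M + C1 * (M + 2) + 2 * h2)"
    define C where "C = 1 + M + h2 + k3 + k4 + k5"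
    have M1: "M \<ge> 1" by (simp add: M_def)
    have h20: "h2 \<ge> 0" by (simp add: h2_def opnorm_nonneg)
    have k30: "k3 \<ge> 0" using C1 M1 by (simp add: k3_def)
    have k40: "k4 \<ge> 0" using C2 M1 by (simp add: k4_def)
    have k50: "k5 \<ge> 0" using C1 M1 h20 by (simp add: k5_def)
    have C0: "C > 0" using M1 h20 k30 k40 k50 by (simp add: C_def)
    show "\<exists>C>0. \<forall>(G1::complex^'n^'n) (E1::complex^'n^'n).
            hermitian G1 \<longrightarrow> G1 = cadj E1 ** E1 \<longrightarrow>
            (\<forall>v. norm (comm G1 H2 *v v) \<le> C1 * (norm (E1 *v v) + norm v)) \<longrightarrow>
            (\<forall>v. norm (comm G1 (comm G1 H2) *v v) \<le> C2 * (norm (G1 *v v) + norm v)) \<longrightarrow>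
            (\<forall>v. let w = mprod K (\<lambda>k. mexp (csc (\<i> * of_real (h * \<xi> k))
                                              (if l k = 1 then G1 else H2))) *v v in
                 norm (G1 *v w) \<le> C * (norm (G1 *v v) + norm v)
               \<and> norm (H2 *v w) \<le> C * norm v
               \<and> norm (comm G1 H2 *v w) \<le> C * (sqrt (norm v * norm (G1 *v v)) + norm v)
               \<and> norm (comm G1 (comm G1 H2) *v w) \<le> C * (norm (G1 *v v) + norm v)
               \<and> norm (comm H2 (comm H2 G1) *v w) \<le> C * (norm (G1 *v v) + norm v))"
    proof (intro exI[of _ C] conjI C0 allI impI)
      fix G1 E1 :: "complex^'n^'n" and v :: "complex^'n"
      assume hG1: "hermitian G1" and hE: "G1 = cadj E1 ** E1"
        and bG1: "\<forall>v. norm (comm G1 H2 *v v) \<le> C1 * (norm (E1 *v v) + norm v)"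
        and bG2: "\<forall>v. norm (comm G1 (comm G1 H2) *v v) \<le> C2 * (norm (G1 *v v) + norm v)"
      define f where "f = (\<lambda>k. mexp (csc (\<i> * of_real (h * \<xi> k)) (if l k = 1 then G1 else H2)))"
      have bndG: "\<forall>x. norm (comm G1 H2 *v x) \<le> C1 * (norm (G1 *v x) + 2 * norm x)"
      proof
        fix x
        have "norm (comm G1 H2 *v x) \<le> C1 * (norm (E1 *v x) + norm x)" using bG1 by blast
        also have "\<dots> \<le> C1 * (norm (G1 *v x) + 2 * norm x)"
          using part1[OF hE, of x] C1 by (intro mult_left_mono) auto
        finally show "norm (comm G1 H2 *v x) \<le> C1 * (norm (G1 *v x) + 2 * norm x)" .
      qed
      have fprop: "\<forall>k\<in>set [1..<K+1]. \<forall>x. norm (f k *v x) = norm x \<and>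
          norm (G1 *v (f k *v x)) \<le> 2 * (norm (G1 *v x) + norm x)"
      proof (intro ballI allI)
        fix k x
        assume "k \<in> set [1..<K+1]"
        then have kK: "k \<in> {1..K}" by auto
        show "norm (f k *v x) = norm x \<and> norm (G1 *v (f k *v x)) \<le> 2 * (norm (G1 *v x) + norm x)"
        proof (cases "l k = 1")
          case True
          have z: "\<forall>y. norm (comm G1 G1 *v y) \<le> 0 * (norm (G1 *v y) + 2 * norm y)"
            by (simp add: comm_self)
          have "\<bar>h * \<xi> k\<bar> * 0 \<le> (1/2::real)" by simp
          from step_bound[OF hG1 order_refl z this]
          show ?thesis using True unitary[OF hG1, of "h * \<xi> k" x] by (simp add: f_def del: of_real_mult)
        next
          case False
          have "\<bar>h * \<xi> k\<bar> * C1 \<le> 1/2"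
          proof -
            have "(C1 + opnorm H2) * \<bar>\<xi> k\<bar> * h \<le> 1/2" using xk kK by blast
            moreover have "opnorm H2 * \<bar>\<xi> k\<bar> * h \<ge> 0" using h0 by (simp add: opnorm_nonneg)
            ultimately show ?thesis using h0 by (simp add: abs_mult algebra_simps)
          qed
          from step_bound[OF herm2 C1 bndG this]
          show ?thesis using False unitary[OF herm2, of "h * \<xi> k" x] by (simp add: f_def del: of_real_mult)
        qed
      qed
      define w where "w = mprod K f *v v"
      have wf: "mprod K f = foldr (\<lambda>k M. f k ** M) [1..<K+1] (mat 1)" by (simp add: mprod_def)
      note pb = prod_bound[OF fprop, of v]
      have len: "length [1..<K+1] = K" by simp
      have nw: "norm w = norm v" using pb unfolding w_def wf by blast
      have "norm (G1 *v w) \<le> 4 ^ length [1..<K+1] * (norm (G1 *v v) + norm v)"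
        using pb unfolding w_def wf by blast
      then have Gw: "norm (G1 *v w) \<le> M * (norm (G1 *v v) + norm v)"
        by (simp only: len M_def)
      note c3 = core3[OF hE bG1 bG2 C1 C2 M1 nw Gw]
      have Y0: "0 \<le> norm (G1 *v v) + norm v" by simp
      have Y1: "0 \<le> sqrt (norm v * norm (G1 *v v)) + norm v" by simp
      have "norm (G1 *v w) \<le> C * (norm (G1 *v v) + norm v)"
        by (rule le_C[OF Gw _ Y0]) (use h20 k30 k40 k50 in \<open>simp add: C_def\<close>)
      moreover have "norm (H2 *v w) \<le> C * norm v"
        by (rule le_C[OF c3(1)[folded h2_def]]) (use M1 k30 k40 k50 in \<open>simp_all add: C_def\<close>)
      moreover have "norm (comm G1 H2 *v w) \<le> C * (sqrt (norm v * norm (G1 *v v)) + norm v)"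
        by (rule le_C[OF c3(2)[folded k3_def] _ Y1]) (use M1 h20 k40 k50 in \<open>simp add: C_def\<close>)
      moreover have "norm (comm G1 (comm G1 H2) *v w) \<le> C * (norm (G1 *v v) + norm v)"
        by (rule le_C[OF c3(3)[folded k4_def] _ Y0]) (use M1 h20 k30 k50 in \<open>simp add: C_def\<close>)
      moreover have "norm (comm H2 (comm H2 G1) *v w) \<le> C * (norm (G1 *v v) + norm v)"
        by (rule le_C[OF c3(4)[folded h2_def, folded k5_def] _ Y0]) (use M1 h20 k30 k40 in \<open>simp add: C_def\<close>)
      ultimately show "let w = mprod K (\<lambda>k. mexp (csc (\<i> * of_real (h * \<xi> k))
                                              (if l k = 1 then G1 else H2))) *v v in
                 norm (G1 *v w) \<le> C * (norm (G1 *v v) + norm v)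
               \<and> norm (H2 *v w) \<le> C * norm v
               \<and> norm (comm G1 H2 *v w) \<le> C * (sqrt (norm v * norm (G1 *v v)) + norm v)
               \<and> norm (comm G1 (comm G1 H2) *v w) \<le> C * (norm (G1 *v v) + norm v)
               \<and> norm (comm H2 (comm H2 G1) *v w) \<le> C * (norm (G1 *v v) + norm v)"
        unfolding Let_def w_def f_def by blast
    qed
  qed
  show ?thesis using P1 P2 P3 by blast
qed

end
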